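(* Let $q>2$, $\sigma,B,K>0$, and let $X_1,\dots,X_n$ be independent mean-zero real-valued random variables with \[ \frac1n\sum_{i=1}^n\mathrm{Var}[X_i]\le\sigma^2,\qquad\frac1n\sum_{i=1}^n\mathbb{E}[|X_i|^q]\le B^q,\qquad\max_{1\le i\le n}|X_i|\le K\ \text{a.s.} \] Let $R=\big(1-(B^q/(\sigma^2K^{q-2}))^{1/(q-2)}\big)_+$. Then for every $z>1$, with probability at least $1-1/z$, \[ \frac1n\sum_{i=1}^nX_i<B\Big(\frac{\sigma^2}{B^2}\Big)^{\frac{q-1}{q-2}}\Psi^{-1}\Big(\Big(\frac{B^2}{\sigma^2}\Big)^{\frac q{q-2}}\frac{\ln z}n\Big)+\frac{2K\ln z}{nq}\Big(W\Big(\frac{(K/B)^{q/([q]+1)}(\ln z)^{1/([q]+1)}}{10\,(nR)^{1/([q]+1)}}\Big)\Big)^{-1}. \]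
   Context: $\Psi(x)=(1+x)\ln(1+x)-x$ for $x\ge0$, with inverse $\Psi^{-1}$ on $[0,\infty)$. $W$ is the Lambert function (principal branch, $W(x)e^{W(x)}=x$ for $x\ge0$), $[q]$ denotes the integer part of $q$, and $(x)_+=\max\{x,0\}$. When $R=0$ the argument of $W$ is interpreted as $+\infty$ and the second term on the right-hand side as $0$. *)

theory Defs
  imports "HOL-Probability.Probability"
begin

definition Psi :: "real \<Rightarrow> real" where
  "Psi x = (1 + x) * ln (1 + x) - x"

definition Psi_inv :: "real \<Rightarrow> real" where
  "Psi_inv y = (THE x. x \<ge> 0 \<and> Psi x = y)"

definition lambertW :: "real \<Rightarrow> real" where
  "lambertW y = (THE w. w \<ge> 0 \<and> w * exp w = y)"

end

theory Submission
  imports Defs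
begin

lemma Psi_strict_mono: assumes "0 \<le> x" "x < y" shows "Psi x < Psi y"
proof -
  have d: "\<And>t. x \<le> t \<Longrightarrow> t \<le> y \<Longrightarrow> (Psi has_real_derivative ln (1 + t)) (at t)"
  proof -
    fix t assume t: "x \<le> t" "t \<le> y"
    have "((\<lambda>x. (1 + x) * ln (1 + x) - x) has_real_derivative (1 * ln (1 + t) + (1 + t) * (1 / (1 + t)) - 1)) (at t)"
      using t assms by (auto intro!: derivative_eq_intros)
    moreover have "1 * ln (1 + t) + (1 + t) * (1 / (1 + t)) - 1 = ln (1 + t)" using t assms by simp
    ultimately show "(Psi has_real_derivative ln (1 + t)) (at t)" unfolding Psi_def[abs_def] by simp
  qed
  obtain z where z: "z > x" "z < y" "Psi y - Psi x = (y - x) * ln (1 + z)"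
    using MVT2[OF assms(2) d] by blast
  have "ln (1 + z) > 0" using z assms by simp
  then have "(y - x) * ln (1 + z) > 0" using assms by simp
  then show ?thesis using z by linarith
qed

lemma Psi_cont: "continuous_on {0..} Psi"
  unfolding Psi_def[abs_def] by (intro continuous_intros) auto

lemma Psi_inv_prop: assumes "0 \<le> y" shows "Psi_inv y \<ge> 0 \<and> Psi (Psi_inv y) = y"
proof -
  define Y where "Y = max y (exp 2)"
  have Y: "Y \<ge> y" "Y \<ge> exp 2" unfolding Y_def by auto
  have Y0: "0 < Y" using Y(2) exp_gt_zero[of 2] by linarith
  have "exp 2 \<le> 1 + Y" using Y by linarith
  then have l2: "ln (1 + Y) \<ge> 2" using Y0 by (subst ln_ge_iff) auto
  have "(1 + Y) * ln (1 + Y) \<ge> (1 + Y) * 2" using l2 Y0 by (intro mult_left_mono) auto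
  then have PY: "Psi Y \<ge> y" proof -
    have "(1 + Y) * 2 = 2 + 2 * Y" by simp
    then show ?thesis unfolding Psi_def using Y Y0 \<open>(1 + Y) * ln (1 + Y) \<ge> (1 + Y) * 2\<close> by linarith
  qed
  have P0: "Psi 0 = 0" by (simp add: Psi_def)
  have "continuous_on {0..Y} Psi" by (rule continuous_on_subset[OF Psi_cont]) auto
  then obtain x where x: "0 \<le> x" "x \<le> Y" "Psi x = y"
    using IVT'[of Psi 0 y Y] P0 PY assms Y0 by auto
  have ex: "\<exists>!x. x \<ge> 0 \<and> Psi x = y"
  proof (rule ex1I[of _ x])
    fix w assume w: "w \<ge> 0 \<and> Psi w = y"
    show "w = x"
    proof (rule ccontr)
      assume "w \<noteq> x"
      then have "w < x \<or> x < w" by auto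
      then show False using Psi_strict_mono[of w x] Psi_strict_mono[of x w] w x by auto
    qed
  qed (use x in auto)
  show ?thesis unfolding Psi_inv_def using theI'[OF ex] by blast
qed

lemma lambertW_prop: assumes "0 \<le> y" shows "lambertW y \<ge> 0 \<and> lambertW y * exp (lambertW y) = y"
proof -
  have mono: "u * exp u < v * exp v" if "0 \<le> u" "u < v" for u v :: real
  proof -
    have "exp u < exp v" using that by simp
    then have "u * exp u \<le> u * exp v" using that by (intro mult_left_mono) auto
    also have "\<dots> < v * exp v" using that by (intro mult_strict_right_mono) auto
    finally show ?thesis .
  qed
  have "1 \<le> exp y" using assms by simp
  then have ge: "y * exp y \<ge> y" using assms mult_left_mono[of 1 "exp y" y] by simp
  have "continuous_on {0..y} (\<lambda>w. w * exp w)" by (intro continuous_intros)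
  then obtain x where x: "0 \<le> x" "x \<le> y" "x * exp x = y"
    using IVT'[of "\<lambda>w. w * exp w" 0 y y] ge assms by auto
  have ex: "\<exists>!x. x \<ge> 0 \<and> x * exp x = y"
  proof (rule ex1I[of _ x])
    fix w assume w: "w \<ge> 0 \<and> w * exp w = y"
    show "w = x"
    proof (rule ccontr)
      assume "w \<noteq> x"
      then have "w < x \<or> x < w" by auto
      then show False using mono[of w x] mono[of x w] w x by auto
    qed
  qed (use x in auto)
  show ?thesis unfolding lambertW_def using theI'[OF ex] by blast
qed

lemma exp_sums: "(\<lambda>n. x^n / fact n) sums exp (x::real)"
  using exp_converges[of x] by (simp add: divide_inverse mult.commute)

definition th :: "real \<Rightarrow> nat \<Rightarrow> real" where "th q k = (q - real k) / (q - 2)"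

lemma amgm:
  fixes y a q :: real
  assumes y: "0 \<le> y" and a: "0 < a" and k: "2 \<le> k" "real k \<le> q" and q: "q > 2"
  shows "y ^ k \<le> th q k * (y\<^sup>2 * a powr (real k - 2)) + (1 - th q k) * (y powr q * a powr (real k - q))"
proof -
  have t0: "0 \<le> th q k" "th q k \<le> 1" using k q by (auto simp: th_def field_simps)
  show ?thesis
  proof (cases "y = 0")
    case True
    then show ?thesis using k t0 by (simp add: power_0_left)
  next
    case False
    then have y0: "y > 0" using y by simp
    define A where "A = y\<^sup>2 * a powr (real k - 2)"
    define C where "C = y powr q * a powr (real k - q)"
    have A0: "A > 0" "C > 0" using y0 a by (auto simp: A_def C_def)
    have lnA: "ln A = 2 * ln y + (real k - 2) * ln a" using y0 a
      by (simp add: A_def ln_mult ln_powr ln_realpow)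
    have lnC: "ln C = q * ln y + (real k - q) * ln a" using y0 a
      by (simp add: C_def ln_mult ln_powr)
    have e: "th q k * ln A + (1 - th q k) * ln C = real k * ln y"
    proof -
      have q2: "q - 2 \<noteq> 0" using q by simp
      have 1: "1 - th q k = (real k - 2) / (q - 2)" using q2 by (simp add: th_def field_simps)
      have "th q k * ln A + (1 - th q k) * ln C = ((q - real k) * ln A + (real k - 2) * ln C) / (q - 2)"
        by (subst 1) (simp add: th_def add_divide_distrib)
      also have "(q - real k) * ln A + (real k - 2) * ln C = real k * ln y * (q - 2)"
        unfolding lnA lnC by (simp add: algebra_simps)
      finally show ?thesis using q2 by simp
    qed
    have "A powr th q k * C powr (1 - th q k) = exp (th q k * ln A + (1 - th q k) * ln C)"
      using A0 by (simp add: powr_def exp_add)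
    also have "\<dots> = y ^ k" unfolding e using y0
      by (simp add: exp_ln ln_realpow[symmetric] ) 
    finally have eq: "A powr th q k * C powr (1 - th q k) = y ^ k" .
    have "A powr th q k * C powr (1 - th q k) \<le> th q k * A + (1 - th q k) * C"
      using Youngs_inequality_0[of "th q k" "1 - th q k" A C] t0 A0 by simp
    with eq show ?thesis unfolding A_def C_def by linarith
  qed
qed


definition alph :: "real \<Rightarrow> real \<Rightarrow> real \<Rightarrow> nat \<Rightarrow> real" where
  "alph l a q M = (\<Sum>k\<in>{2..<M}. th q k * (l^k / fact k) * a powr (real k - 2))"
definition betf :: "real \<Rightarrow> real \<Rightarrow> real \<Rightarrow> nat \<Rightarrow> real" where
  "betf l a q M = (\<Sum>k\<in>{2..<M}. (1 - th q k) * (l^k / fact k) * a powr (real k - q))"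
definition tailc :: "real \<Rightarrow> real \<Rightarrow> real \<Rightarrow> real \<Rightarrow> real \<Rightarrow> nat \<Rightarrow> nat \<Rightarrow> real" where
  "tailc l a K q R M k = (if M \<le> k then (l^k / fact k) * (a powr (real k - q) + real k * R * K powr (real k - q)) else 0)"

lemma k_le_2pow: "real k \<le> 2 ^ k"
proof -
  have "k < 2 ^ k" by (rule less_exp)
  then have "real k \<le> real (2 ^ k)" by linarith
  then show ?thesis by simp
qed

lemma summable_tailc:
  assumes "l > 0" "a > 0" "K > 0" "R \<ge> 0"
  shows "summable (tailc l a K q R M)"
proof (rule summable_comparison_test')
  show "summable (\<lambda>k. a powr (-q) * ((l*a)^k / fact k) + R * K powr (-q) * ((2*l*K)^k / fact k))"
    by (intro summable_add summable_mult sums_summable[OF exp_sums])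
  fix k :: nat assume "0 \<le> k"
  have t0: "tailc l a K q R M k \<ge> 0" using assms by (simp add: tailc_def)
  have "tailc l a K q R M k \<le> a powr (-q) * ((l*a)^k / fact k) + R * K powr (-q) * ((2*l*K)^k / fact k)"
  proof (cases "M \<le> k")
    case True
    have e1: "a powr (real k - q) = a ^ k * a powr (-q)" using assms
      by (simp add: powr_add[symmetric] powr_realpow[symmetric])
    have e2: "K powr (real k - q) = K ^ k * K powr (-q)" using assms
      by (simp add: powr_add[symmetric] powr_realpow[symmetric])
    define c where "c = R * K powr (-q) / fact k"
    have c0: "c \<ge> 0" using assms by (simp add: c_def)
    have "real k * (l * K) ^ k \<le> 2 ^ k * (l * K) ^ k"
      using k_le_2pow assms by (intro mult_right_mono) auto
    then have "c * (real k * (l * K) ^ k) \<le> c * (2 ^ k * (l * K) ^ k)"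
      using c0 by (rule mult_left_mono)
    moreover have "(l^k / fact k) * (real k * R * K powr (real k - q)) = c * (real k * (l * K) ^ k)"
      unfolding e2 c_def by (simp add: power_mult_distrib)
    moreover have "c * (2 ^ k * (l * K) ^ k) = R * K powr (-q) * ((2*l*K)^k / fact k)"
      unfolding c_def by (simp add: power_mult_distrib)
    moreover have "(l^k / fact k) * a powr (real k - q) = a powr (-q) * ((l*a)^k / fact k)"
      unfolding e1 by (simp add: power_mult_distrib)
    ultimately show ?thesis using True by (simp add: tailc_def distrib_left)
  next
    case False
    then show ?thesis using assms by (simp add: tailc_def)
  qed
  then show "norm (tailc l a K q R M k) \<le> a powr (-q) * ((l*a)^k / fact k) + R * K powr (-q) * ((2*l*K)^k / fact k)"
    using t0 by simp
qed


lemma pointwise: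
  fixes l a K q R x :: real
  assumes l: "l > 0" and a: "a > 0" and K: "K > 0" and q: "q > 2" and R: "R \<ge> 0" and x: "\<bar>x\<bar> \<le> K"
    and M: "M = nat \<lfloor>q\<rfloor> + 1"
    and hK: "\<And>k. M \<le> k \<Longrightarrow> K powr (real k - q) \<le> a powr (real k - q) + real k * R * K powr (real k - q)"
  shows "exp (l*x) \<le> 1 + l*x + alph l a q M * x\<^sup>2 + (betf l a q M + suminf (tailc l a K q R M)) * \<bar>x\<bar> powr q"
proof -
  define y where "y = \<bar>x\<bar>"
  have y0: "y \<ge> 0" "y \<le> K" using x by (auto simp: y_def)
  have y2: "y\<^sup>2 = x\<^sup>2" by (simp add: y_def)
  define F where "F k = (if k < 2 then (l*x)^k / fact k else (l^k/fact k) * (th q k * (y\<^sup>2 * a powr (real k - 2)) + (1 - th q k) * (y powr q * a powr (real k - q))))" for k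
  define b where "b k = (if k \<in> {..<M} then F k else 0) + y powr q * tailc l a K q R M k" for k
  have fq: "real_of_int \<lfloor>q\<rfloor> \<le> q" "q < real_of_int \<lfloor>q\<rfloor> + 1" by linarith+
  have fq2: "\<lfloor>q\<rfloor> \<ge> 2" using q by linarith
  have Mge: "M \<ge> 3" using M fq2 by linarith
  have kq: "real k \<le> q" if "k < M" for k
  proof -
    have "int k \<le> \<lfloor>q\<rfloor>" using that M fq2 by linarith
    then show ?thesis using fq by linarith
  qed
  have kq2: "q \<le> real k" if "M \<le> k" for k
  proof -
    have "int k \<ge> \<lfloor>q\<rfloor> + 1" using that M fq2 by linarith
    then show ?thesis using fq by linarith
  qed
  have le: "(l*x)^k / fact k \<le> b k" for k
  proof -
    have "(l*x)^k \<le> \<bar>l*x\<bar>^k" by (metis abs_ge_self power_abs)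
    also have "\<bar>l*x\<bar>^k = l^k * y^k" using l by (simp add: y_def abs_mult power_mult_distrib)
    finally have base: "(l*x)^k \<le> l^k * y^k" .
    have lf: "l^k / fact k \<ge> 0" using l by simp
    show ?thesis
    proof (cases "k < 2")
      case True
      then show ?thesis using Mge by (simp add: b_def F_def tailc_def)
    next
      case False
      show ?thesis
      proof (cases "k < M")
        case True
        have "y ^ k \<le> th q k * (y\<^sup>2 * a powr (real k - 2)) + (1 - th q k) * (y powr q * a powr (real k - q))"
          using amgm[OF y0(1) a _ kq[OF True] q] False by simp
        then have "l^k * y^k \<le> l^k * (th q k * (y\<^sup>2 * a powr (real k - 2)) + (1 - th q k) * (y powr q * a powr (real k - q)))"
          using l by (intro mult_left_mono) auto
        with base have "(l*x)^k / fact k \<le> (l^k * (th q k * (y\<^sup>2 * a powr (real k - 2)) + (1 - th q k) * (y powr q * a powr (real k - q)))) / fact k"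
          by (intro divide_right_mono) auto
        then show ?thesis using True False by (simp add: b_def F_def tailc_def)
      next
        case False2: False
        then have Mk: "M \<le> k" by simp
        have "y ^ k \<le> y powr q * K powr (real k - q)"
        proof (cases "y = 0")
          case True
          then show ?thesis using False by (simp add: power_0_left)
        next
          case False
          then have yp: "y > 0" using y0 by simp
          have "y ^ k = y powr q * y powr (real k - q)"
            using yp by (simp add: powr_add[symmetric] powr_realpow[symmetric])
          also have "\<dots> \<le> y powr q * K powr (real k - q)"
            using yp y0 kq2[OF Mk] by (intro mult_left_mono powr_mono2) auto
          finally show ?thesis .
        qed
        also have "\<dots> \<le> y powr q * (a powr (real k - q) + real k * R * K powr (real k - q))"
          using hK[OF Mk] by (intro mult_left_mono) auto
        finally have "l^k * y^k \<le> l^k * (y powr q * (a powr (real k - q) + real k * R * K powr (real k - q)))"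
          using l by (intro mult_left_mono) auto
        with base have "(l*x)^k / fact k \<le> (l^k * (y powr q * (a powr (real k - q) + real k * R * K powr (real k - q)))) / fact k"
          by (intro divide_right_mono) auto
        then show ?thesis using Mk False2 by (simp add: b_def tailc_def mult_ac)
      qed
    qed
  qed
  have sb: "b sums ((\<Sum>k\<in>{..<M}. F k) + y powr q * suminf (tailc l a K q R M))"
    unfolding b_def
    by (intro sums_add sums_If_finite_set sums_mult summable_sums summable_tailc l a K R) simp
  have main: "exp (l*x) \<le> (\<Sum>k\<in>{..<M}. F k) + y powr q * suminf (tailc l a K q R M)"
    by (rule sums_le[OF le exp_sums sb])
  have split: "{..<M} = {0,1} \<union> {2..<M}" using Mge by auto
  have "(\<Sum>k\<in>{..<M}. F k) = (\<Sum>k\<in>{0,1} \<union> {2..<M}. F k)" using split by simp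
  also have "\<dots> = (\<Sum>k\<in>{0,1}. F k) + (\<Sum>k\<in>{2..<M}. F k)" by (rule sum.union_disjoint) auto
  also have "(\<Sum>k\<in>{0,1}. F k) = 1 + l*x" by (simp add: F_def)
  also have "(\<Sum>k\<in>{2..<M}. F k) = alph l a q M * x\<^sup>2 + betf l a q M * y powr q"
    unfolding alph_def betf_def sum_distrib_right sum.distrib[symmetric]
    by (intro sum.cong) (auto simp: F_def algebra_simps y2 diff_divide_distrib)
  finally show ?thesis using main by (simp add: y_def algebra_simps)
qed

lemma fact_split_le: assumes "1 \<le> M" "M \<le> k" shows "fact (M - 1) * fact (k - M) \<le> (fact (k - 1) :: real)"
proof -
  have "M - 1 \<le> k - 1" using assms by simp
  from binomial_fact_lemma[OF this] have "fact (M - 1) * fact (k - 1 - (M - 1)) * real (k - 1 choose (M - 1)) = (fact (k - 1) :: real)"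
    by (metis of_nat_fact of_nat_mult)
  moreover have "k - 1 - (M - 1) = k - M" using assms by simp
  moreover have "real (k - 1 choose (M - 1)) \<ge> 1" using \<open>M - 1 \<le> k - 1\<close>
    by (simp add: Suc_le_eq)
  ultimately show ?thesis
    by (metis fact_ge_zero mult_le_cancel_left1 mult_nonneg_nonneg not_le order.trans order_refl)
qed

lemma shifted_exp_sums:
  fixes u :: real
  shows "(\<lambda>k. if M \<le> k then u^(k - M) / fact (k - M) else 0) sums exp u"
proof -
  have "(\<lambda>i. (\<lambda>k. if M \<le> k then u^(k - M) / fact (k - M) else 0) (i + M)) sums exp u"
    using exp_sums[of u] by simp
  then have "(\<lambda>k. if M \<le> k then u^(k - M) / fact (k - M) else 0) sums (exp u + (\<Sum>i<M. (\<lambda>k. if M \<le> k then u^(k - M) / fact (k - M) else 0) i))"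
    by (subst (asm) sums_iff_shift)
  then show ?thesis by simp
qed

lemma g_sums:
  fixes l a s2 :: real
  assumes "a > 0"
  shows "(\<lambda>k. if 2 \<le> k then (l^k / fact k) * s2 * a powr (real k - 2) else 0) sums (s2 / a\<^sup>2 * (exp (l*a) - 1 - l*a))"
proof -
  define E where "E k = s2 / a\<^sup>2 * ((l*a)^k / fact k)" for k
  have sE: "E sums (s2 / a\<^sup>2 * exp (l*a))" unfolding E_def by (intro sums_mult exp_sums)
  have sF: "(\<lambda>k. if k \<in> {..<2} then E k else 0) sums (\<Sum>k\<in>{..<2}. E k)"
    by (rule sums_If_finite_set) simp
  have "(\<lambda>k. E k - (if k \<in> {..<2} then E k else 0)) sums (s2 / a\<^sup>2 * exp (l*a) - (\<Sum>k\<in>{..<2}. E k))"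
    by (rule sums_diff[OF sE sF])
  moreover have "(\<Sum>k\<in>{..<2}. E k) = s2 / a\<^sup>2 * (1 + l * a)"
    using assms by (simp add: E_def numeral_2_eq_2 field_simps power2_eq_square)
  moreover have "(\<lambda>k. E k - (if k \<in> {..<2} then E k else 0)) = (\<lambda>k. if 2 \<le> k then (l^k / fact k) * s2 * a powr (real k - 2) else 0)"
  proof
    fix k :: nat
    show "E k - (if k \<in> {..<2} then E k else 0) = (if 2 \<le> k then (l^k / fact k) * s2 * a powr (real k - 2) else 0)"
    proof (cases "2 \<le> k")
      case True
      have "a powr (real k - 2) = a^k / a\<^sup>2" using assms
        by (simp add: powr_diff powr_realpow)
      then show ?thesis using True assms by (simp add: E_def power_mult_distrib mult_ac)
    qed simp
  qed
  ultimately show ?thesis by (simp add: algebra_simps)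
qed


lemma k_fact_le: assumes "1 \<le> M" "M \<le> k"
  shows "real k / fact k \<le> 1 / (fact (M - 1) * fact (k - M))"
proof -
  have k0: "k > 0" using assms by simp
  have "fact k = real k * fact (k - 1)" using fact_reduce[OF k0] by simp
  then have "real k / fact k = 1 / fact (k - 1)" using k0 by simp
  also have "\<dots> \<le> 1 / (fact (M - 1) * fact (k - M))"
    using fact_split_le[OF assms] by (intro divide_left_mono) auto
  finally show ?thesis .
qed

lemma coeff_bound:
  fixes l a K q R s2 Bq :: real
  assumes l: "l > 0" and a: "a > 0" and K: "K > 0" and q: "q > 2" and R: "R \<ge> 0" and s2: "s2 > 0"
    and rel: "Bq = s2 * a powr (q - 2)" and M: "M = nat \<lfloor>q\<rfloor> + 1"
  shows "alph l a q M * s2 + (betf l a q M + suminf (tailc l a K q R M)) * Bq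
     \<le> s2 / a\<^sup>2 * (exp (l*a) - 1 - l*a) + R * Bq * K powr (-q) * (l*K)^M / fact (M - 1) * exp (l*K)"
proof -
  have fq2: "\<lfloor>q\<rfloor> \<ge> 2" using q by linarith
  have Mge: "M \<ge> 3" using M fq2 by linarith
  have Bq0: "Bq > 0" using rel s2 a by simp
  have relk: "Bq * a powr (real k - q) = s2 * a powr (real k - 2)" for k
    unfolding rel using a by (simp add: powr_add[symmetric] mult.assoc)
  define G where "G k = (if 2 \<le> k then (l^k / fact k) * s2 * a powr (real k - 2) else 0)" for k
  define Hs where "Hs k = (if M \<le> k then (l*K)^(k - M) / fact (k - M) else 0)" for k
  define cH where "cH = R * Bq * K powr (-q) * (l*K)^M / fact (M - 1)"
  define D where "D k = (if k \<in> {2..<M} then (l^k / fact k) * s2 * a powr (real k - 2) else 0) + Bq * tailc l a K q R M k" for k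
  have sD: "D sums ((\<Sum>k\<in>{2..<M}. (l^k / fact k) * s2 * a powr (real k - 2)) + Bq * suminf (tailc l a K q R M))"
    unfolding D_def
    by (intro sums_add sums_If_finite_set sums_mult summable_sums summable_tailc l a K R) simp
  have sGH: "(\<lambda>k. G k + cH * Hs k) sums (s2 / a\<^sup>2 * (exp (l*a) - 1 - l*a) + cH * exp (l*K))"
    unfolding G_def Hs_def by (intro sums_add sums_mult g_sums shifted_exp_sums a)
  have le: "D k \<le> G k + cH * Hs k" for k
  proof (cases "M \<le> k")
    case False
    then show ?thesis using Mge by (auto simp: D_def G_def Hs_def tailc_def)
  next
    case True
    have k2: "2 \<le> k" using True Mge by simp
    have eK: "K powr (real k - q) = K ^ k * K powr (-q)" using K
      by (simp add: powr_add[symmetric] powr_realpow[symmetric])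
    have c0: "R * Bq * K powr (-q) * (l*K)^k \<ge> 0" using R Bq0 l K by simp
    have f1: "R * Bq * K powr (-q) * (l*K)^k * (real k / fact k) \<le> R * Bq * K powr (-q) * (l*K)^k * (1 / (fact (M - 1) * fact (k - M)))"
      using k_fact_le[of M k] True Mge c0 by (intro mult_left_mono) auto
    have f2: "Bq * ((l^k / fact k) * (real k * R * K powr (real k - q))) = R * Bq * K powr (-q) * (l*K)^k * (real k / fact k)"
      unfolding eK by (simp add: power_mult_distrib mult_ac)
    have f3: "R * Bq * K powr (-q) * (l*K)^k * (1 / (fact (M - 1) * fact (k - M))) = cH * Hs k"
    proof -
      have "(l*K)^k = (l*K)^M * (l*K)^(k-M)" using True by (simp add: power_add[symmetric])
      then show ?thesis using True by (simp add: cH_def Hs_def mult_ac)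
    qed
    have f4: "D k = G k + Bq * ((l^k / fact k) * (real k * R * K powr (real k - q)))"
      using True k2 relk[of k] by (simp add: D_def G_def tailc_def algebra_simps)
    have "Bq * ((l^k / fact k) * (real k * R * K powr (real k - q))) \<le> cH * Hs k"
      unfolding f2 using f1[unfolded f3] .
    then show ?thesis using f4 by linarith
  qed
  have "(\<Sum>k\<in>{2..<M}. (l^k / fact k) * s2 * a powr (real k - 2)) + Bq * suminf (tailc l a K q R M)
      \<le> s2 / a\<^sup>2 * (exp (l*a) - 1 - l*a) + cH * exp (l*K)"
    by (rule sums_le[OF le sD sGH])
  moreover have "(\<Sum>k\<in>{2..<M}. (l^k / fact k) * s2 * a powr (real k - 2)) = alph l a q M * s2 + betf l a q M * Bq"
  proof -
    have "alph l a q M * s2 + betf l a q M * Bq = (\<Sum>k\<in>{2..<M}. th q k * (l^k / fact k) * (s2 * a powr (real k - 2)) + (1 - th q k) * (l^k / fact k) * (Bq * a powr (real k - q)))"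
      unfolding alph_def betf_def sum_distrib_right sum.distrib by (simp add: mult_ac)
    also have "\<dots> = (\<Sum>k\<in>{2..<M}. (l^k / fact k) * s2 * a powr (real k - 2))"
      by (intro sum.cong refl) (simp add: relk algebra_simps diff_divide_distrib)
    finally show ?thesis by simp
  qed
  ultimately show ?thesis by (simp add: cH_def algebra_simps)
qed

context prob_space begin

lemma chernoff:
  fixes X :: "nat \<Rightarrow> 'a \<Rightarrow> real" and n :: nat and l K q \<alpha> \<beta> t :: real
  assumes meas: "\<And>i. i \<in> {1..n} \<Longrightarrow> X i \<in> borel_measurable M"
    and ind: "indep_vars (\<lambda>_. borel) X {1..n}"
    and mean0: "\<And>i. i \<in> {1..n} \<Longrightarrow> expectation (X i) = 0"
    and bnd: "AE \<omega> in M. \<forall>i\<in>{1..n}. \<bar>X i \<omega>\<bar> \<le> K"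
    and l: "l > 0" and n: "n > 0" and q: "q \<ge> 0"
    and pw: "\<And>x. \<bar>x\<bar> \<le> K \<Longrightarrow> exp (l*x) \<le> 1 + l*x + \<alpha> * x\<^sup>2 + \<beta> * \<bar>x\<bar> powr q"
  shows "measure M {\<omega> \<in> space M. t \<le> (1 / real n) * (\<Sum>i=1..n. X i \<omega>)}
     \<le> exp (- l * real n * t + (\<Sum>i=1..n. \<alpha> * expectation (\<lambda>\<omega>. (X i \<omega>)\<^sup>2) + \<beta> * expectation (\<lambda>\<omega>. \<bar>X i \<omega>\<bar> powr q)))"
proof -
  define u where "u i = \<alpha> * expectation (\<lambda>\<omega>. (X i \<omega>)\<^sup>2) + \<beta> * expectation (\<lambda>\<omega>. \<bar>X i \<omega>\<bar> powr q)" for i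
  have bi: "AE \<omega> in M. \<bar>X i \<omega>\<bar> \<le> K" if "i \<in> {1..n}" for i
    by (rule AE_mp[OF bnd], intro AE_I2) (use that in auto)
  have ints: "integrable M (\<lambda>\<omega>. exp (l * X i \<omega>)) \<and> integrable M (X i) \<and> integrable M (\<lambda>\<omega>. (X i \<omega>)\<^sup>2)
      \<and> integrable M (\<lambda>\<omega>. \<bar>X i \<omega>\<bar> powr q)" if i: "i \<in> {1..n}" for i
  proof -
    have [measurable]: "X i \<in> borel_measurable M" using meas i .
    have a1: "integrable M (\<lambda>\<omega>. exp (l * X i \<omega>))"
    proof (rule integrable_const_bound[where B="exp (l*K)"])
      show "AE x in M. norm (exp (l * X i x)) \<le> exp (l * K)"
        using bi[OF i] by eventually_elim (use l in \<open>auto intro!: mult_left_mono\<close>)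
    qed measurable
    have a2: "integrable M (X i)"
      by (rule integrable_const_bound[where B="K"]) (use bi[OF i] in auto)
    have a3: "integrable M (\<lambda>\<omega>. (X i \<omega>)\<^sup>2)"
    proof (rule integrable_const_bound[where B="K\<^sup>2"])
      show "AE x in M. norm ((X i x)\<^sup>2) \<le> K\<^sup>2"
        using bi[OF i] by eventually_elim (auto simp: abs_le_square_iff[symmetric] intro: order.trans[OF _ abs_ge_self] power_mono)
    qed measurable
    have a4: "integrable M (\<lambda>\<omega>. \<bar>X i \<omega>\<bar> powr q)"
    proof (rule integrable_const_bound[where B="K powr q"])
      show "AE x in M. norm (\<bar>X i x\<bar> powr q) \<le> K powr q"
        using bi[OF i] by eventually_elim (auto intro: powr_mono2 q)
    qed measurable
    show ?thesis using a1 a2 a3 a4 by blast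
  qed
  have indE: "indep_vars (\<lambda>_. borel) (\<lambda>i \<omega>. exp (l * X i \<omega>)) {1..n}"
    by (rule indep_vars_compose2[OF ind]) measurable
  have intY: "integrable M (\<lambda>\<omega>. \<Prod>i\<in>{1..n}. exp (l * X i \<omega>))"
    by (rule indep_vars_integrable[OF _ indE]) (use ints in auto)
  have EY: "expectation (\<lambda>\<omega>. \<Prod>i\<in>{1..n}. exp (l * X i \<omega>)) = (\<Prod>i\<in>{1..n}. expectation (\<lambda>\<omega>. exp (l * X i \<omega>)))"
    by (rule indep_vars_lebesgue_integral[OF _ indE]) (use ints in auto)
  have Ei: "0 \<le> expectation (\<lambda>\<omega>. exp (l * X i \<omega>)) \<and> expectation (\<lambda>\<omega>. exp (l * X i \<omega>)) \<le> exp (u i)"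
    if i: "i \<in> {1..n}" for i
  proof
    show "0 \<le> expectation (\<lambda>\<omega>. exp (l * X i \<omega>))" by (rule integral_nonneg_AE) simp
    have "expectation (\<lambda>\<omega>. exp (l * X i \<omega>)) \<le> expectation (\<lambda>\<omega>. 1 + l * X i \<omega> + \<alpha> * (X i \<omega>)\<^sup>2 + \<beta> * \<bar>X i \<omega>\<bar> powr q)"
    proof (rule integral_mono_AE)
      show "integrable M (\<lambda>\<omega>. exp (l * X i \<omega>))" using ints[OF i] by blast
      show "integrable M (\<lambda>\<omega>. 1 + l * X i \<omega> + \<alpha> * (X i \<omega>)\<^sup>2 + \<beta> * \<bar>X i \<omega>\<bar> powr q)"
        using ints[OF i] by (intro Bochner_Integration.integrable_add integrable_mult_right integrable_const) auto
      show "AE \<omega> in M. exp (l * X i \<omega>) \<le> 1 + l * X i \<omega> + \<alpha> * (X i \<omega>)\<^sup>2 + \<beta> * \<bar>X i \<omega>\<bar> powr q"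
        using bi[OF i] by eventually_elim (rule pw)
    qed
    also have "\<dots> = 1 + u i"
      using ints[OF i] mean0[OF i] by (simp add: u_def prob_space)
    also have "\<dots> \<le> exp (u i)" by simp
    finally show "expectation (\<lambda>\<omega>. exp (l * X i \<omega>)) \<le> exp (u i)" .
  qed
  have prodle: "(\<Prod>i\<in>{1..n}. expectation (\<lambda>\<omega>. exp (l * X i \<omega>))) \<le> exp (\<Sum>i=1..n. u i)"
    unfolding exp_sum[OF finite_atLeastAtMost] by (rule prod_mono) (use Ei in blast)
  have ev: "{\<omega> \<in> space M. t \<le> (1 / real n) * (\<Sum>i=1..n. X i \<omega>)}
      = {\<omega> \<in> space M. exp (l * real n * t) \<le> (\<Prod>i\<in>{1..n}. exp (l * X i \<omega>))}"
  proof -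
    have f1: "t \<le> (1 / real n) * s \<longleftrightarrow> exp (l * real n * t) \<le> exp (l * s)" for s
    proof -
      have "t \<le> (1 / real n) * s \<longleftrightarrow> real n * t \<le> s" using n by (simp add: field_simps)
      also have "\<dots> \<longleftrightarrow> l * (real n * t) \<le> l * s" using l by simp
      finally show ?thesis by (simp add: mult.assoc)
    qed
    have f2: "exp (l * (\<Sum>i=1..n. X i \<omega>)) = (\<Prod>i\<in>{1..n}. exp (l * X i \<omega>))" for \<omega>
      by (simp add: sum_distrib_left exp_sum)
    have key: "t \<le> (1 / real n) * (\<Sum>i=1..n. X i \<omega>) \<longleftrightarrow> exp (l * real n * t) \<le> (\<Prod>i\<in>{1..n}. exp (l * X i \<omega>))" for \<omega>
      unfolding f2[symmetric] by (rule f1)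
    show ?thesis using key by blast
  qed
  have "measure M {\<omega> \<in> space M. exp (l * real n * t) \<le> (\<Prod>i\<in>{1..n}. exp (l * X i \<omega>))}
      \<le> expectation (\<lambda>\<omega>. \<Prod>i\<in>{1..n}. exp (l * X i \<omega>)) / exp (l * real n * t)"
    by (rule integral_Markov_inequality_measure[OF intY, where A="space M"]) (auto intro!: AE_I2 prod_nonneg)
  also have "\<dots> \<le> exp (\<Sum>i=1..n. u i) / exp (l * real n * t)"
    unfolding EY by (rule divide_right_mono[OF prodle]) simp
  also have "\<dots> = exp (- l * real n * t + (\<Sum>i=1..n. u i))"
    by (simp add: exp_add[symmetric] exp_diff[symmetric])
  finally show ?thesis unfolding ev u_def .
qed

end

lemma bernoulli_le: fixes s :: real assumes "0 \<le> s" shows "1 - real k * (1 - s) \<le> s ^ k"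
proof (induction k)
  case 0 then show ?case by simp
next
  case (Suc k)
  have "s * (1 - real k * (1 - s)) \<le> s * s ^ k" using Suc assms by (intro mult_left_mono) auto
  moreover have "1 - real (Suc k) * (1 - s) \<le> s * (1 - real k * (1 - s))"
  proof -
    have "s * (1 - real k * (1 - s)) - (1 - real (Suc k) * (1 - s)) = real k * (1 - s)\<^sup>2"
      by (simp add: algebra_simps power2_eq_square)
    moreover have "real k * (1 - s)\<^sup>2 \<ge> 0" by simp
    ultimately show ?thesis by linarith
  qed
  ultimately show ?case by simp
qed

lemma hK_lemma:
  fixes a K q :: real and k :: nat
  assumes a: "a > 0" and K: "K > 0" and q: "q > 0" and kq: "q \<le> real k"
  shows "K powr (real k - q) \<le> a powr (real k - q) + real k * max 0 (1 - a / K) * K powr (real k - q)"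
proof (cases "K \<le> a")
  case True
  have "K powr (real k - q) \<le> a powr (real k - q)" using True K kq by (intro powr_mono2) auto
  moreover have "real k * max 0 (1 - a / K) * K powr (real k - q) \<ge> 0" by simp
  ultimately show ?thesis by linarith
next
  case False
  define s where "s = a / K"
  have s: "0 < s" "s < 1" using False a K by (auto simp: s_def)
  have R: "max 0 (1 - a / K) = 1 - s" using s by (simp add: s_def)
  have as: "a = s * K" using K by (simp add: s_def)
  have "s powr real k \<le> s powr (real k - q)" using s q by (intro powr_mono') auto
  moreover have "s powr real k = s ^ k" using s by (simp add: powr_realpow)
  ultimately have "1 - real k * (1 - s) \<le> s powr (real k - q)" using bernoulli_le[of s k] s by linarith
  then have "K powr (real k - q) * (1 - real k * (1 - s)) \<le> K powr (real k - q) * s powr (real k - q)"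
    by (intro mult_left_mono) auto
  moreover have "a powr (real k - q) = s powr (real k - q) * K powr (real k - q)"
    unfolding as using s K by (simp add: powr_mult)
  ultimately show ?thesis unfolding R by (simp add: algebra_simps)
qed

lemma pow_fact_bound: fixes M :: nat assumes "M \<ge> 1"
  shows "real M ^ M \<le> 10 ^ M * fact (M - 1)"
proof -
  have "real M ^ M / fact M \<le> exp (real M)"
  proof -
    have "(\<Sum>i\<in>{M}. real M ^ i / fact i) \<le> (\<Sum>i. real M ^ i / fact i)"
      by (rule sum_le_suminf) (auto intro: sums_summable[OF exp_sums])
    then show ?thesis using sums_unique[OF exp_sums[of "real M"]] by simp
  qed
  then have h1: "real M ^ M \<le> exp (real M) * fact M" by (simp add: field_simps)
  have "exp (real M) = exp 1 ^ M" using exp_of_nat_mult[of M 1] by simp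
  also have "\<dots> \<le> 3 ^ M" using exp_le by (intro power_mono) auto
  finally have h2: "exp (real M) \<le> 3 ^ M" .
  have h3: "fact M = real M * fact (M - 1)" using assms fact_reduce[of M] by simp
  have "real M ^ M \<le> 3 ^ M * (real M * fact (M - 1))"
    using h1 h2 h3 by (metis fact_ge_zero mult_right_mono order.trans)
  also have "\<dots> \<le> 3 ^ M * (2 ^ M * fact (M - 1))"
    using k_le_2pow[of M] by (intro mult_left_mono mult_right_mono) auto
  also have "\<dots> = 6 ^ M * fact (M - 1)" by (simp add: power_mult_distrib[symmetric])
  also have "\<dots> \<le> 10 ^ M * fact (M - 1)" by (intro mult_right_mono power_mono) auto
  finally show ?thesis .
qed

lemma core:
  fixes sv a K q L R W v Bq :: real and n M :: nat
  assumes sv: "sv > 0" and a: "a > 0" and K: "K > 0" and q: "q > 2" and L: "L > 0" and n: "n > 0"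
    and R: "R \<ge> 0" and M: "M = nat \<lfloor>q\<rfloor> + 1" and Bq: "Bq > 0"
    and v: "v > 0" "Psi v = a\<^sup>2 * L / (real n * sv)"
    and W: "R > 0 \<Longrightarrow> W > 0 \<and> R * Bq * K powr (-q) * (W * exp W)^M * 10^M = L / real n"
  shows "\<exists>l>0. l * (sv / a * v + (if R = 0 then 0 else 2 * K * L / (real n * q) / W))
     - (sv / a\<^sup>2 * (exp (l*a) - 1 - l*a) + R * Bq * K powr (-q) * (l*K)^M / fact (M - 1) * exp (l*K)) \<ge> L / real n"
proof -
  define t1 where "t1 = sv / a * v"
  define t2 where "t2 = (if R = 0 then 0 else 2 * K * L / (real n * q) / W)"
  define g where "g l = sv / a\<^sup>2 * (exp (l*a) - 1 - l*a)" for l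
  define H where "H l = R * Bq * K powr (-q) * (l*K)^M / fact (M - 1) * exp (l*K)" for l
  have fq2: "\<lfloor>q\<rfloor> \<ge> 2" using q by linarith
  have Mge: "M \<ge> 3" using M fq2 by linarith
  have Mq: "real M \<ge> q" using M by linarith
  define l1 where "l1 = ln (1 + v) / a"
  have l1: "l1 > 0" using v a by (simp add: l1_def)
  have el1: "exp (l1 * a) = 1 + v" using a v by (simp add: l1_def)
  have B1: "l1 * t1 - g l1 = L / real n"
  proof -
    have "l1 * t1 - g l1 = sv / a\<^sup>2 * ((1 + v) * ln (1 + v) - v)"
      unfolding g_def el1 t1_def l1_def using a v by (simp add: field_simps power2_eq_square)
    also have "\<dots> = sv / a\<^sup>2 * Psi v" by (simp add: Psi_def)
    also have "\<dots> = L / real n" unfolding v(2) using sv a n by (simp add: field_simps)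
    finally show ?thesis .
  qed
  have B2: "g l \<le> l * t1" if "0 < l" "l \<le> l1" for l
  proof -
    define u where "u = l * a"
    have u0: "u > 0" using that a by (simp add: u_def)
    have "exp u \<le> exp (l1 * a)" unfolding u_def using that a by (simp add: mult_right_mono)
    then have eu: "exp u - 1 \<le> v" using el1 by simp
    have "1 - u \<le> exp (-u)" using exp_ge_add_one_self[of "-u"] by simp
    then have "(1 - u) * exp u \<le> exp (-u) * exp u" by (intro mult_right_mono) auto
    then have "(1 - u) * exp u \<le> 1" by (simp add: exp_minus field_simps)
    then have "exp u - 1 - u \<le> u * (exp u - 1)" by (simp add: algebra_simps)
    also have "\<dots> \<le> u * v" using eu u0 by (intro mult_left_mono) auto
    finally have "sv / a\<^sup>2 * (exp u - 1 - u) \<le> sv / a\<^sup>2 * (u * v)" using sv a by (intro mult_left_mono) auto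
    also have "\<dots> = l * t1" using a by (simp add: u_def t1_def power2_eq_square field_simps)
    finally show ?thesis by (simp add: g_def u_def)
  qed
  have main: "\<exists>l>0. l * (t1 + t2) - (g l + H l) \<ge> L / real n"
  proof (cases "R = 0")
    case True
    then have "l1 * (t1 + t2) - (g l1 + H l1) = L / real n" using B1 by (simp add: t2_def H_def)
    then show ?thesis using l1 by (intro exI[of _ l1]) auto
  next
    case False
    then have Rp: "R > 0" using R by simp
    from W[OF Rp] have W0: "W > 0" and WL: "R * Bq * K powr (-q) * (W * exp W)^M * 10^M = L / real n" by auto
    define P where "P = R * Bq * K powr (-q)"
    have P0: "P \<ge> 0" using Rp Bq by (simp add: P_def)
    define l2 where "l2 = real M * W / K"
    have l2: "l2 > 0" using W0 K Mge by (simp add: l2_def)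
    have T2: "l2 * t2 \<ge> 2 * L / real n"
    proof -
      have "l2 * t2 = 2 * L / real n * (real M / q)"
        using False W0 K q n by (simp add: l2_def t2_def field_simps)
      moreover have "real M / q \<ge> 1" using Mq q by simp
      moreover have "2 * L / real n \<ge> 0" using L by simp
      ultimately show ?thesis by (metis mult_left_mono mult.right_neutral)
    qed
    have H2: "H l2 \<le> L / real n"
    proof -
      have "(l2 * K)^M * exp (l2 * K) = real M ^ M * (W * exp W)^M"
      proof -
        have "l2 * K = real M * W" using K by (simp add: l2_def)
        moreover have "exp (real M * W) = exp W ^ M" by (rule exp_of_nat_mult)
        ultimately show ?thesis by (simp add: power_mult_distrib)
      qed
      then have "H l2 = P * (W * exp W)^M * (real M ^ M / fact (M - 1))"
        by (simp add: H_def P_def mult_ac)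
      also have "\<dots> \<le> P * (W * exp W)^M * 10 ^ M"
      proof (rule mult_left_mono)
        show "real M ^ M / fact (M - 1) \<le> 10 ^ M"
          using pow_fact_bound[of M] Mge by (simp add: divide_le_eq)
        show "0 \<le> P * (W * exp W)^M" using P0 W0 by simp
      qed
      also have "\<dots> = L / real n" using WL by (simp add: P_def)
      finally show ?thesis .
    qed
    have H3: "H l \<le> l / l2 * H l2" if "0 < l" "l \<le> l2" for l
    proof -
      define c where "c = P * K^M / fact (M - 1)"
      have c0: "c \<ge> 0" using P0 K by (simp add: c_def)
      have Hf: "H x = c * x^M * exp (x * K)" for x
        by (simp add: H_def c_def P_def power_mult_distrib)
      have pM: "x^M = x * x^(M - 1)" for x :: real
        using Mge by (metis Suc_diff_1 less_le_trans numeral_less_iff order.refl power_Suc zero_less_numeral semiring_norm(76) le_less_trans)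
      have "l^(M-1) \<le> l2^(M-1)" using that by (intro power_mono) auto
      moreover have "exp (l * K) \<le> exp (l2 * K)" using that K by (simp add: mult_right_mono)
      ultimately have "l^(M-1) * exp (l * K) \<le> l2^(M-1) * exp (l2 * K)"
        using l2 by (intro mult_mono) auto
      then have "c * l * (l^(M-1) * exp (l * K)) \<le> c * l * (l2^(M-1) * exp (l2 * K))"
        using c0 that by (intro mult_left_mono) auto
      moreover have "H l = c * l * (l^(M-1) * exp (l * K))" unfolding Hf pM by (simp add: mult_ac)
      moreover have "l / l2 * H l2 = c * l * (l2^(M-1) * exp (l2 * K))" unfolding Hf pM using l2 by (simp add: field_simps)
      ultimately show ?thesis by simp
    qed
    show ?thesis
    proof (cases "l1 \<le> l2")
      case True
      have "H l1 \<le> l1 / l2 * H l2" using H3 l1 True by blast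
      also have "\<dots> \<le> l1 / l2 * (l2 * t2)"
      proof (rule mult_left_mono)
        have "2 * L / real n = 2 * (L / real n)" by simp
        moreover have "L / real n > 0" using L n by simp
        ultimately show "H l2 \<le> l2 * t2" using H2 T2 by linarith
      qed (use l1 l2 in auto)
      also have "\<dots> = l1 * t2" using l2 by simp
      finally have "H l1 \<le> l1 * t2" .
      then have "l1 * (t1 + t2) - (g l1 + H l1) \<ge> L / real n" using B1 by (simp add: algebra_simps)
      then show ?thesis using l1 by blast
    next
      case False
      have "g l2 \<le> l2 * t1" using B2 l2 False by simp
      moreover have "H l2 \<le> l2 * t2 - L / real n" using H2 T2 by simp
      ultimately have "l2 * (t1 + t2) - (g l2 + H l2) \<ge> L / real n" by (simp add: algebra_simps)
      then show ?thesis using l2 by blast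
    qed
  qed
  then show ?thesis unfolding t1_def t2_def g_def H_def .
qed

lemma ln_eqD: "0 < x \<Longrightarrow> 0 < y \<Longrightarrow> ln x = ln (y::real) \<Longrightarrow> x = y" by simp

lemma powr_ids:
  fixes \<sigma> B K q :: real
  assumes s: "\<sigma> > 0" and B: "B > 0" and K: "K > 0" and q: "q > 2"
  defines "a \<equiv> (B powr q / \<sigma>\<^sup>2) powr (1 / (q - 2))"
  shows "(B\<^sup>2 / \<sigma>\<^sup>2) powr (q / (q - 2)) = a\<^sup>2 / \<sigma>\<^sup>2"
    and "B * (\<sigma>\<^sup>2 / B\<^sup>2) powr ((q - 1) / (q - 2)) = \<sigma>\<^sup>2 / a"
    and "(B powr q / (\<sigma>\<^sup>2 * K powr (q - 2))) powr (1 / (q - 2)) = a / K"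
    and "B powr q = \<sigma>\<^sup>2 * a powr (q - 2)"
    and "a > 0"
proof -
  have q2: "q - 2 \<noteq> 0" using q by simp
  have a0: "a > 0" using s B by (simp add: a_def)
  have la: "ln a = (q * ln B - 2 * ln \<sigma>) / (q - 2)"
    using s B by (simp add: a_def ln_powr ln_div ln_realpow divide_simps)
  show "a > 0" by (rule a0)
  show "(B\<^sup>2 / \<sigma>\<^sup>2) powr (q / (q - 2)) = a\<^sup>2 / \<sigma>\<^sup>2"
  proof -
    have "ln ((B\<^sup>2 / \<sigma>\<^sup>2) powr (q / (q - 2))) = q / (q - 2) * (2 * ln B - 2 * ln \<sigma>)"
      using s B by (simp add: ln_powr ln_div ln_realpow)
    also have "\<dots> = 2 * ln a - 2 * ln \<sigma>" unfolding la using q2 by (simp add: field_simps)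
    also have "\<dots> = ln (a\<^sup>2 / \<sigma>\<^sup>2)" using s a0 by (simp add: ln_div ln_realpow)
    finally show ?thesis by (rule ln_eqD[rotated 2]) (use s B a0 in auto)
  qed
  show "B * (\<sigma>\<^sup>2 / B\<^sup>2) powr ((q - 1) / (q - 2)) = \<sigma>\<^sup>2 / a"
  proof -
    have "ln (B * (\<sigma>\<^sup>2 / B\<^sup>2) powr ((q - 1) / (q - 2))) = ln B + (q - 1) / (q - 2) * (2 * ln \<sigma> - 2 * ln B)"
      using s B by (simp add: ln_mult ln_powr ln_div ln_realpow)
    also have "\<dots> = 2 * ln \<sigma> - ln a" unfolding la using q2 by (simp add: field_simps)
    also have "\<dots> = ln (\<sigma>\<^sup>2 / a)" using s a0 by (simp add: ln_div ln_realpow)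
    finally show ?thesis by (rule ln_eqD[rotated 2]) (use s B a0 in auto)
  qed
  show "(B powr q / (\<sigma>\<^sup>2 * K powr (q - 2))) powr (1 / (q - 2)) = a / K"
  proof -
    have "ln ((B powr q / (\<sigma>\<^sup>2 * K powr (q - 2))) powr (1 / (q - 2))) = (q * ln B - 2 * ln \<sigma> - (q - 2) * ln K) / (q - 2)"
      using s B K by (simp add: ln_mult ln_powr ln_div ln_realpow)
    also have "\<dots> = ln a - ln K" unfolding la using q2 by (simp add: field_simps)
    also have "\<dots> = ln (a / K)" using K a0 by (simp add: ln_div)
    finally show ?thesis by (rule ln_eqD[rotated 2]) (use s B K a0 in auto)
  qed
  show "B powr q = \<sigma>\<^sup>2 * a powr (q - 2)"
  proof -
    have "a powr (q - 2) = B powr q / \<sigma>\<^sup>2" using q2 s B by (simp add: a_def powr_powr)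
    then show ?thesis using s by simp
  qed
qed

theorem theorem4p2:
  fixes M :: "'a measure" and X :: "nat \<Rightarrow> 'a \<Rightarrow> real"
    and n :: nat and q \<sigma> B K :: real
  assumes "prob_space M"
    and "n > 0"
    and "q > 2" and "\<sigma> > 0" and "B > 0" and "K > 0"
    and "\<And>i. i \<in> {1..n} \<Longrightarrow> X i \<in> borel_measurable M"
    and "prob_space.indep_vars M (\<lambda>_. borel) X {1..n}"
    and "\<And>i. i \<in> {1..n} \<Longrightarrow> integrable M (X i)"
    and "\<And>i. i \<in> {1..n} \<Longrightarrow> prob_space.expectation M (X i) = 0"
    and "(1 / real n) * (\<Sum>i=1..n. prob_space.variance M (X i)) \<le> \<sigma>\<^sup>2"
    and "(1 / real n) * (\<Sum>i=1..n. prob_space.expectation M (\<lambda>\<omega>. \<bar>X i \<omega>\<bar> powr q)) \<le> B powr q"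
    and "AE \<omega> in M. \<forall>i\<in>{1..n}. \<bar>X i \<omega>\<bar> \<le> K"
  shows "\<forall>z::real. z > 1 \<longrightarrow>
    (let R = max 0 (1 - (B powr q / (\<sigma>\<^sup>2 * K powr (q - 2))) powr (1 / (q - 2)));
         m = real_of_int \<lfloor>q\<rfloor> + 1;
         rhs = B * (\<sigma>\<^sup>2 / B\<^sup>2) powr ((q - 1) / (q - 2))
                 * Psi_inv ((B\<^sup>2 / \<sigma>\<^sup>2) powr (q / (q - 2)) * ln z / real n)
               + (if R = 0 then 0 else
                   (2 * K * ln z / (real n * q)) /
                   lambertW ((K / B) powr (q / m) * (ln z) powr (1 / m)
                             / (10 * (real n * R) powr (1 / m))))
     in measure M {\<omega> \<in> space M. (1 / real n) * (\<Sum>i=1..n. X i \<omega>) < rhs} \<ge> 1 - 1 / z)"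
proof -
  note ps = assms(1)
  interpret prob_space M by (rule ps)
  have n: "n > 0" and q: "q > 2" and s: "\<sigma> > 0" and B: "B > 0" and K: "K > 0" using assms by auto
  have meas: "\<And>i. i \<in> {1..n} \<Longrightarrow> X i \<in> borel_measurable M" using assms(7) by blast
  have ind: "indep_vars (\<lambda>_. borel) X {1..n}" using assms(8) by blast
  have mean0: "\<And>i. i \<in> {1..n} \<Longrightarrow> expectation (X i) = 0" using assms(10) by blast
  have varb: "(1 / real n) * (\<Sum>i=1..n. variance (X i)) \<le> \<sigma>\<^sup>2" using assms(11) by blast
  have momb: "(1 / real n) * (\<Sum>i=1..n. expectation (\<lambda>\<omega>. \<bar>X i \<omega>\<bar> powr q)) \<le> B powr q" using assms(12) by blast
  have bnd: "AE \<omega> in M. \<forall>i\<in>{1..n}. \<bar>X i \<omega>\<bar> \<le> K" using assms(13) by blast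
  show ?thesis
  proof (intro allI impI)
    fix z :: real assume z: "z > 1"
    define L where "L = ln z"
    have L: "L > 0" using z by (simp add: L_def)
    define a where "a = (B powr q / \<sigma>\<^sup>2) powr (1 / (q - 2))"
    note ids = powr_ids[OF s B K q, folded a_def]
    have a: "a > 0" by (rule ids(5))
    define Mn where "Mn = nat \<lfloor>q\<rfloor> + 1"
    have fq2: "\<lfloor>q\<rfloor> \<ge> 2" using q by linarith
    have mreal: "real_of_int \<lfloor>q\<rfloor> + 1 = real Mn" using fq2 by (simp add: Mn_def)
    have "nat \<lfloor>q\<rfloor> \<ge> 2" using fq2 by (simp add: le_nat_iff)
    then have Mge: "Mn \<ge> 3" by (simp add: Mn_def)
    define R where "R = max 0 (1 - (B powr q / (\<sigma>\<^sup>2 * K powr (q - 2))) powr (1 / (q - 2)))"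
    have Ra: "R = max 0 (1 - a / K)" unfolding R_def ids(3) ..
    have R0: "R \<ge> 0" by (simp add: R_def)
    define xarg where "xarg = (K / B) powr (q / real Mn) * L powr (1 / real Mn) / (10 * (real n * R) powr (1 / real Mn))"
    define W where "W = lambertW xarg"
    define v where "v = Psi_inv (a\<^sup>2 / \<sigma>\<^sup>2 * L / real n)"
    define rhs where "rhs = \<sigma>\<^sup>2 / a * v + (if R = 0 then 0 else 2 * K * L / (real n * q) / W)"
    have yv: "a\<^sup>2 / \<sigma>\<^sup>2 * L / real n > 0" using a s L n by simp
    have v: "v > 0" "Psi v = a\<^sup>2 * L / (real n * \<sigma>\<^sup>2)"
    proof -
      have h: "v \<ge> 0 \<and> Psi v = a\<^sup>2 / \<sigma>\<^sup>2 * L / real n" unfolding v_def by (rule Psi_inv_prop) (use yv in simp)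
      then show "Psi v = a\<^sup>2 * L / (real n * \<sigma>\<^sup>2)" by (simp add: field_simps)
      show "v > 0"
      proof (rule ccontr)
        assume "\<not> v > 0"
        then have "v = 0" using h by simp
        then show False using h yv a L s n by (simp add: Psi_def)
      qed
    qed
    have Wfacts: "W > 0 \<and> R * B powr q * K powr (-q) * (W * exp W)^Mn * 10^Mn = L / real n" if Rp: "R > 0"
    proof -
      have Mn0: "real Mn > 0" using Mge by simp
      have x0: "xarg > 0" unfolding xarg_def using K B L n Rp by simp
      have hW: "W \<ge> 0 \<and> W * exp W = xarg" unfolding W_def by (rule lambertW_prop) (use x0 in simp)
      have W0: "W > 0"
      proof (rule ccontr)
        assume "\<not> W > 0"
        then have "W = 0" using hW by simp
        then show False using hW x0 by simp
      qed
      have pw: "(y powr (c / real Mn)) ^ Mn = y powr c" if "y > 0" for y c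
        using that Mn0 by (simp add: powr_power)
      have "xarg ^ Mn = (K / B) powr q * L / (10 ^ Mn * (real n * R))"
        unfolding xarg_def using K B L n Rp
        by (simp add: power_divide power_mult_distrib pw[of "K/B" q] pw[of L 1] pw[of "real n * R" 1])
      then have "R * B powr q * K powr (-q) * (W * exp W)^Mn * 10^Mn
          = R * B powr q * K powr (-q) * ((K / B) powr q * L / (10 ^ Mn * (real n * R))) * 10^Mn"
        using hW by simp
      also have "\<dots> = (B powr q * K powr (-q) * (K / B) powr q) * L / real n"
        using Rp n by (simp add: field_simps)
      also have "B powr q * K powr (-q) * (K / B) powr q = 1"
        using K B by (simp add: powr_divide powr_minus field_simps)
      finally show ?thesis using W0 by simp
    qed
    obtain l where l: "l > 0" and lcore: "l * (\<sigma>\<^sup>2 / a * v + (if R = 0 then 0 else 2 * K * L / (real n * q) / W))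
       - (\<sigma>\<^sup>2 / a\<^sup>2 * (exp (l*a) - 1 - l*a) + R * B powr q * K powr (-q) * (l*K)^Mn / fact (Mn - 1) * exp (l*K)) \<ge> L / real n"
      using core[where sv="\<sigma>\<^sup>2" and Bq="B powr q" and W=W, OF _ a K q L n R0 Mn_def _ v] s B Wfacts by auto
    define \<alpha> where "\<alpha> = alph l a q Mn"
    define \<beta> where "\<beta> = betf l a q Mn + suminf (tailc l a K q R Mn)"
    have pw: "exp (l*x) \<le> 1 + l*x + \<alpha> * x\<^sup>2 + \<beta> * \<bar>x\<bar> powr q" if "\<bar>x\<bar> \<le> K" for x
      unfolding \<alpha>_def \<beta>_def
    proof (rule pointwise[OF l a K q R0 that Mn_def])
      fix k assume k: "Mn \<le> k"
      have "q \<le> real k"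
      proof -
        have "int k \<ge> \<lfloor>q\<rfloor> + 1" using k fq2 by (simp add: Mn_def)
        then show ?thesis by linarith
      qed
      then show "K powr (real k - q) \<le> a powr (real k - q) + real k * R * K powr (real k - q)"
        unfolding Ra using hK_lemma[OF a K _ , of q k] q by simp
    qed
    have ch: "measure M {\<omega> \<in> space M. rhs \<le> (1 / real n) * (\<Sum>i=1..n. X i \<omega>)}
      \<le> exp (- l * real n * rhs + (\<Sum>i=1..n. \<alpha> * expectation (\<lambda>\<omega>. (X i \<omega>)\<^sup>2) + \<beta> * expectation (\<lambda>\<omega>. \<bar>X i \<omega>\<bar> powr q)))"
      by (rule chernoff[OF meas ind mean0 bnd l n _ pw]) (use q in auto)
    have \<alpha>0: "\<alpha> \<ge> 0"
    proof -
      have "th q k \<ge> 0" if "k \<in> {2..<Mn}" for k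
      proof -
        have "int k \<le> \<lfloor>q\<rfloor>" using that by (simp add: Mn_def) linarith
        then have "real k \<le> q" by linarith
        then show ?thesis using q by (simp add: th_def)
      qed
      then show ?thesis unfolding \<alpha>_def alph_def using l a by (intro sum_nonneg) auto
    qed
    have \<beta>0: "\<beta> \<ge> 0"
    proof -
      have "betf l a q Mn \<ge> 0"
      proof -
        have "1 - th q k \<ge> 0" if "k \<in> {2..<Mn}" for k
          using that q by (simp add: th_def field_simps)
        then show ?thesis unfolding betf_def using l a by (intro sum_nonneg) auto
      qed
      moreover have "suminf (tailc l a K q R Mn) \<ge> 0"
        by (rule suminf_nonneg[OF summable_tailc[OF l a K R0]]) (use l a K R0 in \<open>simp add: tailc_def\<close>)
      ultimately show ?thesis by (simp add: \<beta>_def)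
    qed
    have S1: "(\<Sum>i=1..n. expectation (\<lambda>\<omega>. (X i \<omega>)\<^sup>2)) \<le> real n * \<sigma>\<^sup>2"
    proof -
      have "(\<Sum>i=1..n. expectation (\<lambda>\<omega>. (X i \<omega>)\<^sup>2)) = (\<Sum>i=1..n. variance (X i))"
        using mean0 by (intro sum.cong) auto
      then show ?thesis using varb n by (simp add: field_simps)
    qed
    have S2: "(\<Sum>i=1..n. expectation (\<lambda>\<omega>. \<bar>X i \<omega>\<bar> powr q)) \<le> real n * B powr q"
      using momb n by (simp add: field_simps)
    have "(\<Sum>i=1..n. \<alpha> * expectation (\<lambda>\<omega>. (X i \<omega>)\<^sup>2) + \<beta> * expectation (\<lambda>\<omega>. \<bar>X i \<omega>\<bar> powr q))
        = \<alpha> * (\<Sum>i=1..n. expectation (\<lambda>\<omega>. (X i \<omega>)\<^sup>2)) + \<beta> * (\<Sum>i=1..n. expectation (\<lambda>\<omega>. \<bar>X i \<omega>\<bar> powr q))"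
      by (simp add: sum.distrib sum_distrib_left)
    also have "\<dots> \<le> \<alpha> * (real n * \<sigma>\<^sup>2) + \<beta> * (real n * B powr q)"
      using S1 S2 \<alpha>0 \<beta>0 by (intro add_mono mult_left_mono) auto
    also have "\<dots> = real n * (\<alpha> * \<sigma>\<^sup>2 + \<beta> * B powr q)" by (simp add: algebra_simps)
    also have "\<dots> \<le> real n * (\<sigma>\<^sup>2 / a\<^sup>2 * (exp (l*a) - 1 - l*a) + R * B powr q * K powr (-q) * (l*K)^Mn / fact (Mn - 1) * exp (l*K))"
      unfolding \<alpha>_def \<beta>_def
      by (intro mult_left_mono coeff_bound[OF l a K q R0 _ ids(4) Mn_def]) (use s in auto)
    finally have Sb: "(\<Sum>i=1..n. \<alpha> * expectation (\<lambda>\<omega>. (X i \<omega>)\<^sup>2) + \<beta> * expectation (\<lambda>\<omega>. \<bar>X i \<omega>\<bar> powr q))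
       \<le> real n * (\<sigma>\<^sup>2 / a\<^sup>2 * (exp (l*a) - 1 - l*a) + R * B powr q * K powr (-q) * (l*K)^Mn / fact (Mn - 1) * exp (l*K))" .
    have gen_eq: "\<And>G r. - l * real n * r + real n * G = - real n * (l * r - G)" by (simp add: algebra_simps)
    have "- l * real n * rhs + real n * (\<sigma>\<^sup>2 / a\<^sup>2 * (exp (l*a) - 1 - l*a) + R * B powr q * K powr (-q) * (l*K)^Mn / fact (Mn - 1) * exp (l*K))
        = - real n * (l * rhs - (\<sigma>\<^sup>2 / a\<^sup>2 * (exp (l*a) - 1 - l*a) + R * B powr q * K powr (-q) * (l*K)^Mn / fact (Mn - 1) * exp (l*K)))"
      using gen_eq by blast
    also have "\<dots> \<le> - real n * (L / real n)"
      using lcore n unfolding rhs_def by (intro mult_left_mono_neg) auto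
    also have "\<dots> = - L" using n by simp
    finally have ex: "- l * real n * rhs + (\<Sum>i=1..n. \<alpha> * expectation (\<lambda>\<omega>. (X i \<omega>)\<^sup>2) + \<beta> * expectation (\<lambda>\<omega>. \<bar>X i \<omega>\<bar> powr q)) \<le> - L"
      using Sb by linarith
    have pb: "measure M {\<omega> \<in> space M. rhs \<le> (1 / real n) * (\<Sum>i=1..n. X i \<omega>)} \<le> 1 / z"
    proof -
      have "exp (- L) = 1 / z" using z by (simp add: L_def exp_minus inverse_eq_divide)
      then show ?thesis using order.trans[OF ch iffD2[OF exp_le_cancel_iff ex]] by simp
    qed
    have mf[measurable]: "(\<lambda>\<omega>. (1 / real n) * (\<Sum>i=1..n. X i \<omega>)) \<in> borel_measurable M"
      using meas by (intro borel_measurable_times borel_measurable_sum measurable_const) auto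
    have evA: "{\<omega> \<in> space M. rhs \<le> (1 / real n) * (\<Sum>i=1..n. X i \<omega>)} \<in> events" by measurable
    have "space M - {\<omega> \<in> space M. rhs \<le> (1 / real n) * (\<Sum>i=1..n. X i \<omega>)} = {\<omega> \<in> space M. (1 / real n) * (\<Sum>i=1..n. X i \<omega>) < rhs}"
      by auto
    then have "measure M {\<omega> \<in> space M. (1 / real n) * (\<Sum>i=1..n. X i \<omega>) < rhs} = 1 - measure M {\<omega> \<in> space M. rhs \<le> (1 / real n) * (\<Sum>i=1..n. X i \<omega>)}"
      using prob_compl[OF evA] by simp
    then have main: "measure M {\<omega> \<in> space M. (1 / real n) * (\<Sum>i=1..n. X i \<omega>) < rhs} \<ge> 1 - 1 / z"
      using pb by linarith
    show "let R = max 0 (1 - (B powr q / (\<sigma>\<^sup>2 * K powr (q - 2))) powr (1 / (q - 2)));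
         m = real_of_int \<lfloor>q\<rfloor> + 1;
         rhs = B * (\<sigma>\<^sup>2 / B\<^sup>2) powr ((q - 1) / (q - 2))
                 * Psi_inv ((B\<^sup>2 / \<sigma>\<^sup>2) powr (q / (q - 2)) * ln z / real n)
               + (if R = 0 then 0 else
                   (2 * K * ln z / (real n * q)) /
                   lambertW ((K / B) powr (q / m) * (ln z) powr (1 / m)
                             / (10 * (real n * R) powr (1 / m))))
     in measure M {\<omega> \<in> space M. (1 / real n) * (\<Sum>i=1..n. X i \<omega>) < rhs} \<ge> 1 - 1 / z"
      unfolding Let_def R_def[symmetric] mreal ids(1) ids(2) L_def[symmetric]
      unfolding xarg_def[symmetric] W_def[symmetric] v_def[symmetric] rhs_def[symmetric]
      by (rule main)
  qed
qed

end
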